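(* Let $\varepsilon\in(0,\tfrac12)$ and let $W_n=W_n^{\varepsilon}$ be the weighted diamonds defined below. Then there is a constant $C(\varepsilon)<\infty$ such that for every $n\ge 0$ the metric space $V(W_n)$ (with weighted shortest path distance) admits a bilipschitz embedding into $\ell_2$ with distortion at most $C(\varepsilon)$.
   Context: Diamonds: $D_0$ is an edge; $D_i$ is obtained from $D_{i-1}$ by replacing each edge $uv$ by a quadrilateral $u,a,v,b$ (so $V(D_{i-1})\subseteq V(D_i)$ and the edges of $D_{i-1}$ are not edges of $D_i$). Weighted diamonds: $W_0=D_0$ with its edge of weight $1$; for $n\ge1$, $W_n$ has vertex set $V(D_n)$ and edge set $E(W_{n-1})\cup E(D_n)$, where edges of $W_{n-1}$ keep their weights and each edge of $D_n$ gets weight $(\tfrac12+\varepsilon)^n$. Thus $W_n$ has all edges of $D_0,D_1,\dots,D_n$, the edges of $D_j$ having weight $(\tfrac12+\varepsilon)^j$. $W_n$ carries the weighted shortest path metric. *)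

theory Defs
  imports "HOL-Analysis.Analysis"
begin

text \<open>An edge of D_j is addressed by a word of length j over {0,1,2,3}, most
  recent refinement digit first.  When the edge with address w (an edge of
  D_j, endpoints u,v) is replaced by the quadrilateral u,a,v,b, the new
  vertices are a = Mid w False and b = Mid w True, and the four new edges
  u-a, a-v, u-b, b-v get addresses 0#w, 1#w, 2#w, 3#w.\<close>

datatype dvert = Src | Snk | Mid "nat list" bool

primrec ends :: "nat list \<Rightarrow> dvert \<times> dvert" where
  "ends [] = (Src, Snk)"
| "ends (k # w) = (case ends w of (u, v) \<Rightarrow>
      (if k = 0 then (u, Mid w False)
       else if k = 1 then (Mid w False, v)
       else if k = 2 then (u, Mid w True)
       else (Mid w True, v)))"

definition addrs :: "nat \<Rightarrow> nat list set" where
  "addrs j = {w. length w = j \<and> set w \<subseteq> {0..<4}}"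

definition dverts :: "nat \<Rightarrow> dvert set" where
  "dverts n = {Src, Snk} \<union> {Mid w b | w b. w \<in> addrs (length w) \<and> length w < n}"

definition wedge :: "real \<Rightarrow> nat \<Rightarrow> dvert \<Rightarrow> dvert \<Rightarrow> real \<Rightarrow> bool" where
  "wedge eps n u v c \<longleftrightarrow> (\<exists>j\<le>n. \<exists>w\<in>addrs j.
      (ends w = (u, v) \<or> ends w = (v, u)) \<and> c = (1/2 + eps) ^ j)"

inductive wwalk :: "real \<Rightarrow> nat \<Rightarrow> dvert \<Rightarrow> dvert \<Rightarrow> real \<Rightarrow> bool"
  for eps n where
  refl: "wwalk eps n x x 0"
| step: "wedge eps n u v c \<Longrightarrow> wwalk eps n v y d \<Longrightarrow> wwalk eps n u y (c + d)"

definition wdist :: "real \<Rightarrow> nat \<Rightarrow> dvert \<Rightarrow> dvert \<Rightarrow> real" where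
  "wdist eps n x y = Inf {d. wwalk eps n x y d}"

definition in_ell2 :: "(nat \<Rightarrow> real) \<Rightarrow> bool" where
  "in_ell2 a \<longleftrightarrow> summable (\<lambda>i. (a i)\<^sup>2)"

definition ell2_dist :: "(nat \<Rightarrow> real) \<Rightarrow> (nat \<Rightarrow> real) \<Rightarrow> real" where
  "ell2_dist a b = sqrt (\<Sum>i. (a i - b i)\<^sup>2)"

definition embeds_with_distortion ::
  "'a set \<Rightarrow> ('a \<Rightarrow> 'a \<Rightarrow> real) \<Rightarrow> ('a \<Rightarrow> nat \<Rightarrow> real) \<Rightarrow> real \<Rightarrow> bool" where
  "embeds_with_distortion V d f D \<longleftrightarrow> (\<forall>x\<in>V. in_ell2 (f x)) \<and>
     (\<exists>s>0. \<forall>x\<in>V. \<forall>y\<in>V. s * d x y \<le> ell2_dist (f x) (f y) \<and>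
                           ell2_dist (f x) (f y) \<le> D * s * d x y)"

end

theory Submission
  imports Defs
begin

definition hi :: "nat \<Rightarrow> bool" where "hi k \<longleftrightarrow> k \<noteq> 0 \<and> k \<noteq> 2"
definition brk :: "nat \<Rightarrow> bool" where "brk k \<longleftrightarrow> k \<noteq> 0 \<and> k \<noteq> 1"

fun cp :: "nat \<Rightarrow> dvert \<Rightarrow> dvert" where
  "cp k Src = (if k = 0 then Src else if k = 1 then Mid [] False else if k = 2 then Src else Mid [] True)"
| "cp k Snk = (if k = 0 then Mid [] False else if k = 1 then Snk else if k = 2 then Mid [] True else Snk)"
| "cp k (Mid w b) = Mid (w @ [k]) b"

lemma ends_snoc: "ends (w @ [k]) = (cp k (fst (ends w)), cp k (snd (ends w)))"
  by (induction w) (auto split: prod.splits)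

primrec pos :: "nat list \<Rightarrow> real" where
  "pos [] = 0"
| "pos (k # w) = pos w + (if hi k then (1/2)^(Suc (length w)) else 0)"

fun rho :: "dvert \<Rightarrow> real" where
  "rho Src = 0" | "rho Snk = 1" | "rho (Mid w b) = pos w + (1/2)^(Suc (length w))"

lemma pos_snoc: "pos (w @ [k]) = (if hi k then 1/2 else 0) + pos w / 2"
  by (induction w) (auto simp: field_simps)

lemma pos_bounds: "0 \<le> pos w \<and> pos w \<le> 1 - (1/2)^(length w)"
  by (induction w) (auto simp: field_simps)

lemma rho_bounds: "0 \<le> rho x \<and> rho x \<le> 1"
proof (cases x)
  case (Mid w b)
  define p where "p = (1/2::real)^(length w)"
  have h: "0 \<le> p" unfolding p_def by simp
  have "pos w + p / 2 \<le> 1" using pos_bounds[of w] h unfolding p_def[symmetric] by linarith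
  then have "pos w + (1/2)^(length w) / 2 \<le> 1" unfolding p_def .
  then show ?thesis using pos_bounds[of w] Mid h by auto
qed auto

lemma rho_cp: "rho (cp k x) = (if hi k then 1/2 else 0) + rho x / 2"
  by (cases x) (auto simp: hi_def pos_snoc field_simps)

definition phi :: "real \<Rightarrow> real" where "phi t = min t (1 - t)"

fun br :: "dvert \<Rightarrow> bool" where
  "br Src = False" | "br Snk = False" | "br (Mid w b) = (if w = [] then b else brk (last w))"

definition F0 :: "dvert \<Rightarrow> bool \<Rightarrow> real" where
  "F0 y bb = (if br y = bb then phi (rho y) else 0)"

fun F :: "real \<Rightarrow> dvert \<Rightarrow> nat list \<times> bool \<Rightarrow> real" where
  "F r (Mid w' b') (w, bb) = (if (\<exists>s. w' = s @ w) then r ^ length w * F0 (Mid (take (length w' - length w) w') b') bb else 0)"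
| "F r Src c = 0" | "F r Snk c = 0"

lemma snoc_suffix: "(\<exists>t. w @ [k] = t @ (s @ [k'])) \<longleftrightarrow> k' = k \<and> (\<exists>t. w = t @ s)"
  by (metis append.assoc append1_eq_conv)

lemma F_cp_snoc: "F r (cp k x) (s @ [k'], bb) = (if k' = k then r * F r x (s, bb) else 0)"
proof (cases x)
  case (Mid w b)
  show ?thesis
  proof (cases "k' = k \<and> (\<exists>t. w = t @ s)")
    case True
    then obtain t where t: "w = t @ s" "k' = k" by auto
    have "take (length w - length s) (w @ [k]) = take (length w - length s) w" by simp
    then show ?thesis using Mid t by auto
  next
    case False
    then show ?thesis using Mid snoc_suffix[of w k s k'] by auto
  qed
qed auto

lemma F_cp_nil: "F r (cp k x) ([], bb) = (if bb = brk k then phi (rho (cp k x)) else 0)"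
  by (cases x) (auto simp: F0_def phi_def brk_def hi_def)

lemma F_nil_br: "F r x ([], br x) = phi (rho x)"
  by (cases x) (auto simp: F0_def phi_def)

fun SP :: "dvert \<Rightarrow> (nat list \<times> bool) set" where
  "SP (Mid w b) = (\<lambda>i. drop i w) ` {..length w} \<times> UNIV" | "SP Src = {}" | "SP Snk = {}"

lemma finite_SP: "finite (SP x)"
  by (cases x) auto

lemma F_supp: "c \<notin> SP x \<Longrightarrow> F r x c = 0"
proof (cases x)
  case (Mid w b)
  assume c: "c \<notin> SP x"
  obtain s bb where cs: "c = (s, bb)" by (cases c)
  have "\<not> (\<exists>t. w = t @ s)"
  proof
    assume "\<exists>t. w = t @ s"
    then obtain t where "w = t @ s" by auto
    then have "s = drop (length t) w" "length t \<le> length w" by auto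
    then show False using c Mid cs by auto
  qed
  then show ?thesis using Mid cs by auto
qed auto


fun G :: "real \<Rightarrow> dvert \<Rightarrow> (nat list \<times> bool) option \<Rightarrow> real" where
  "G r x None = rho x" | "G r x (Some c) = F r x c"

definition SG :: "dvert \<Rightarrow> (nat list \<times> bool) option set" where
  "SG x = insert None (Some ` SP x)"

lemma finite_SG: "finite (SG x)" by (simp add: SG_def finite_SP)

lemma G_supp: "c \<notin> SG x \<Longrightarrow> G r x c = 0"
  by (cases c) (auto simp: SG_def intro: F_supp)

definition nrm :: "real \<Rightarrow> dvert \<Rightarrow> dvert \<Rightarrow> real" where
  "nrm r x y = L2_set (\<lambda>c. G r x c - G r y c) (SG x \<union> SG y)"

lemma nrm_eq:
  assumes "finite T" "SG x \<union> SG y \<subseteq> T"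
  shows "nrm r x y = L2_set (\<lambda>c. G r x c - G r y c) T"
proof -
  have "(\<Sum>c\<in>SG x \<union> SG y. (G r x c - G r y c)^2) = (\<Sum>c\<in>T. (G r x c - G r y c)^2)"
    by (rule sum.mono_neutral_left) (use assms G_supp in auto)
  then show ?thesis unfolding nrm_def L2_set_def by simp
qed

lemma nrm_sym: "nrm r x y = nrm r y x"
proof -
  have "(\<Sum>c\<in>SG x \<union> SG y. (G r x c - G r y c)^2) = (\<Sum>c\<in>SG y \<union> SG x. (G r y c - G r x c)^2)"
    by (simp add: Un_commute power2_commute)
  then show ?thesis unfolding nrm_def L2_set_def by simp
qed

lemma nrm_refl: "nrm r x x = 0"
  unfolding nrm_def L2_set_def by simp

lemma nrm_triangle: "nrm r x z \<le> nrm r x y + nrm r y z"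
proof -
  let ?T = "SG x \<union> SG y \<union> SG z"
  have fT: "finite ?T" by (simp add: finite_SG)
  have "nrm r x z = L2_set (\<lambda>c. (G r x c - G r y c) + (G r y c - G r z c)) ?T"
    by (subst nrm_eq[OF fT]) auto
  also have "\<dots> \<le> L2_set (\<lambda>c. G r x c - G r y c) ?T + L2_set (\<lambda>c. G r y c - G r z c) ?T"
    by (rule L2_set_triangle_ineq)
  also have "\<dots> = nrm r x y + nrm r y z"
    by (subst (1 2) nrm_eq[OF fT]) auto
  finally show ?thesis .
qed

lemma coord_le_nrm: "\<bar>G r x c - G r y c\<bar> \<le> nrm r x y"
proof (cases "c \<in> SG x \<union> SG y")
  case True
  have "\<bar>G r x c - G r y c\<bar> \<le> L2_set (\<lambda>c. \<bar>G r x c - G r y c\<bar>) (SG x \<union> SG y)"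
    by (rule member_le_L2_set) (use True finite_SG in auto)
  also have "\<dots> = nrm r x y" unfolding nrm_def L2_set_def by simp
  finally show ?thesis .
next
  case False
  then show ?thesis using G_supp[of c x r] G_supp[of c y r] by (simp add: nrm_def)
qed

definition PS :: "nat list \<Rightarrow> nat list set" where
  "PS w = (\<lambda>i. drop i w) ` {1..length w}"

lemma PS_snoc: "PS (w @ [k]) = insert [] ((\<lambda>s. s @ [k]) ` PS w)"
proof -
  have A: "(\<lambda>i. drop i (w @ [k])) ` {1..length w} = (\<lambda>s. s @ [k]) ` PS w"
    unfolding PS_def image_image by (rule image_cong) auto
  have "{1..Suc (length w)} = insert (Suc (length w)) {1..length w}" by auto
  then have "PS (w @ [k]) = insert (drop (Suc (length w)) (w @ [k])) ((\<lambda>i. drop i (w @ [k])) ` {1..length w})"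
    unfolding PS_def by simp
  then show ?thesis using A by simp
qed

lemma finite_PS: "finite (PS w)" by (simp add: PS_def)

lemma ends_form: "fst (ends w) \<in> {Src, Snk} \<union> {Mid (drop i w) b | i b. 1 \<le> i \<and> i \<le> length w}
  \<and> snd (ends w) \<in> {Src, Snk} \<union> {Mid (drop i w) b | i b. 1 \<le> i \<and> i \<le> length w}"
proof (induction w)
  case Nil then show ?case by simp
next
  case (Cons k w)
  have D: "\<And>i. drop i w = drop (Suc i) (k # w)" by simp
  have S: "{Src, Snk} \<union> {Mid (drop i w) b | i b. 1 \<le> i \<and> i \<le> length w}
     \<subseteq> {Src, Snk} \<union> {Mid (drop i (k#w)) b | i b. 1 \<le> i \<and> i \<le> length (k#w)}"
  proof
    fix x assume "x \<in> {Src, Snk} \<union> {Mid (drop i w) b | i b. 1 \<le> i \<and> i \<le> length w}"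
    then show "x \<in> {Src, Snk} \<union> {Mid (drop i (k#w)) b | i b. 1 \<le> i \<and> i \<le> length (k#w)}"
    proof
      assume "x \<in> {Mid (drop i w) b | i b. 1 \<le> i \<and> i \<le> length w}"
      then obtain i b where "x = Mid (drop i w) b" "1 \<le> i" "i \<le> length w" by auto
      then show ?thesis by (intro UnI2 CollectI exI[of _ "Suc i"] exI[of _ b]) auto
    qed auto
  qed
  have M: "\<And>b. Mid w b \<in> {Src, Snk} \<union> {Mid (drop i (k#w)) b | i b. 1 \<le> i \<and> i \<le> length (k#w)}"
    by (intro UnI2 CollectI exI[of _ 1]) auto
  obtain u v where uv: "ends w = (u, v)" by (cases "ends w")
  show ?case using Cons.IH S M uv by (auto simp: Let_def)
qed

lemma SP_ends:
  assumes "x = fst (ends w) \<or> x = snd (ends w)"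
  shows "SP x \<subseteq> PS w \<times> UNIV"
proof -
  have "x \<in> {Src, Snk} \<union> {Mid (drop i w) b | i b. 1 \<le> i \<and> i \<le> length w}"
    using ends_form[of w] assms by auto
  then show ?thesis
  proof
    assume "x \<in> {Mid (drop i w) b | i b. 1 \<le> i \<and> i \<le> length w}"
    then obtain i b where x: "x = Mid (drop i w) b" "1 \<le> i" "i \<le> length w" by auto
    show ?thesis
    proof
      fix c assume "c \<in> SP x"
      then obtain j bb where c: "c = (drop j (drop i w), bb)" "j \<le> length w - i" using x by auto
      have "drop j (drop i w) = drop (i + j) w" by (simp add: add.commute)
      moreover have "1 \<le> i + j" "i + j \<le> length w" using x c by auto
      ultimately show "c \<in> PS w \<times> UNIV" unfolding PS_def using c by force
    qed
  qed auto
qed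


definition Esum :: "real \<Rightarrow> nat list \<Rightarrow> dvert \<Rightarrow> dvert \<Rightarrow> real" where
  "Esum r w u v = (\<Sum>s\<in>PS w. (F r u (s, False) - F r v (s, False))^2 + (F r u (s, True) - F r v (s, True))^2)"

lemma phi_cp: "phi (rho (cp k x)) = (if hi k then (1 - rho x)/2 else rho x / 2)"
  using rho_bounds[of x] by (auto simp: rho_cp phi_def)

lemma Esum_snoc:
  "Esum r (w @ [k]) (cp k u) (cp k v) = ((rho u - rho v)/2)^2 + r^2 * Esum r w u v"
proof -
  have nin: "[] \<notin> (\<lambda>s. s @ [k]) ` PS w" by auto
  have inj: "inj_on (\<lambda>s. s @ [k]) (PS w)" by (auto simp: inj_on_def)
  have t0: "(F r (cp k u) ([], False) - F r (cp k v) ([], False))^2 + (F r (cp k u) ([], True) - F r (cp k v) ([], True))^2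
     = ((rho u - rho v)/2)^2"
    by (cases "brk k"; cases "hi k") (auto simp: F_cp_nil phi_cp power2_eq_square field_simps)
  have "Esum r (w @ [k]) (cp k u) (cp k v) =
     ((rho u - rho v)/2)^2 + (\<Sum>s\<in>PS w. (F r (cp k u) (s@[k], False) - F r (cp k v) (s@[k], False))^2 + (F r (cp k u) (s@[k], True) - F r (cp k v) (s@[k], True))^2)"
    unfolding Esum_def PS_snoc
    by (simp add: sum.insert[OF _ nin] finite_PS sum.reindex[OF inj] t0)
  also have "(\<Sum>s\<in>PS w. (F r (cp k u) (s@[k], False) - F r (cp k v) (s@[k], False))^2 + (F r (cp k u) (s@[k], True) - F r (cp k v) (s@[k], True))^2)
     = r^2 * Esum r w u v"
    unfolding Esum_def sum_distrib_left
    by (rule sum.cong) (auto simp: F_cp_snoc power2_eq_square algebra_simps)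
  finally show ?thesis .
qed

lemma edge_lemma:
  assumes B: "0 \<le> B" "1 + B \<le> 4 * r^2 * B"
  shows "\<bar>rho (fst (ends w)) - rho (snd (ends w))\<bar> = (1/2)^length w \<and>
         Esum r w (fst (ends w)) (snd (ends w)) \<le> B * (r^(2*length w) - (1/4)^length w)"
proof (induction w rule: rev_induct)
  case Nil
  then show ?case by (simp add: Esum_def PS_def)
next
  case (snoc k w)
  let ?u = "fst (ends w)" and ?v = "snd (ends w)"
  define a where "a = ((1/4)::real)^length w"
  define p where "p = r^(2*length w)"
  have a0: "0 \<le> a" unfolding a_def by simp
  have IH1: "\<bar>rho ?u - rho ?v\<bar> = (1/2)^length w" using snoc by simp
  have IH2: "Esum r w ?u ?v \<le> B * (p - a)" using snoc unfolding a_def p_def by simp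
  have sq: "((rho ?u - rho ?v)/2)^2 = a/4"
  proof -
    have "((rho ?u - rho ?v)/2)^2 = (\<bar>rho ?u - rho ?v\<bar>)^2/4" by (simp add: power2_eq_square field_simps)
    also have "\<dots> = ((1/2)^length w)^2 / 4" using IH1 by simp
    also have "\<dots> = a/4" unfolding a_def by (simp add: power_mult_distrib[symmetric] power2_eq_square power_mult[symmetric] flip: power_mult_distrib)
    finally show ?thesis .
  qed
  have E: "Esum r (w @ [k]) (cp k ?u) (cp k ?v) = a/4 + r^2 * Esum r w ?u ?v"
    using Esum_snoc sq by simp
  have r2: "0 \<le> r^2" by simp
  have "r^2 * Esum r w ?u ?v \<le> r^2 * (B * (p - a))" using IH2 r2 by (rule mult_left_mono)
  moreover have "a * (1 + B) \<le> a * (4 * r^2 * B)" using B(2) a0 by (rule mult_left_mono)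
  ultimately have "a/4 + r^2 * Esum r w ?u ?v \<le> B * (r^2 * p - a/4)"
    by (simp add: algebra_simps)
  moreover have "r^(2*length (w@[k])) = r^2 * p" unfolding p_def by (simp add: power_add[symmetric])
  moreover have "(1/4::real)^length (w@[k]) = a/4" unfolding a_def by simp
  ultimately have A2: "Esum r (w @ [k]) (cp k ?u) (cp k ?v) \<le> B * (r^(2*length (w@[k])) - (1/4)^length (w@[k]))"
    using E by simp
  have A1: "\<bar>rho (cp k ?u) - rho (cp k ?v)\<bar> = (1/2)^length (w@[k])"
  proof -
    have "rho (cp k ?u) - rho (cp k ?v) = (rho ?u - rho ?v)/2" by (simp add: rho_cp field_simps)
    then have "\<bar>rho (cp k ?u) - rho (cp k ?v)\<bar> = \<bar>rho ?u - rho ?v\<bar>/2" by (simp only: abs_divide)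
    then show ?thesis using IH1 by simp
  qed
  show ?case using A1 A2 by (simp add: ends_snoc)
qed


lemma edge_nrm:
  assumes B: "0 \<le> B" "1 + B \<le> 4 * r^2 * B" and r: "1/2 \<le> r"
  shows "nrm r (fst (ends w)) (snd (ends w)) \<le> sqrt (B + 1) * r ^ length w"
proof -
  let ?u = "fst (ends w)" and ?v = "snd (ends w)"
  let ?T = "insert None (Some ` (PS w \<times> (UNIV::bool set)))"
  have fT: "finite ?T" by (simp add: finite_PS finite_cartesian_product)
  have sub: "SG ?u \<union> SG ?v \<subseteq> ?T"
    using SP_ends[of ?u w] SP_ends[of ?v w] unfolding SG_def by auto
  have EL: "\<bar>rho ?u - rho ?v\<bar> = (1/2)^length w" "Esum r w ?u ?v \<le> B * (r^(2*length w) - (1/4)^length w)"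
    using edge_lemma[OF B] by auto
  have "(\<Sum>c\<in>Some ` (PS w \<times> (UNIV::bool set)). (G r ?u c - G r ?v c)^2) = (\<Sum>c\<in>PS w \<times> UNIV. (F r ?u c - F r ?v c)^2)"
    by (simp add: sum.reindex)
  also have "\<dots> = (\<Sum>s\<in>PS w. \<Sum>bb\<in>UNIV. (F r ?u (s,bb) - F r ?v (s,bb))^2)"
    by (simp add: sum.cartesian_product)
  also have "\<dots> = Esum r w ?u ?v" unfolding Esum_def by (simp add: UNIV_bool add.commute)
  finally have S: "(\<Sum>c\<in>Some ` (PS w \<times> (UNIV::bool set)). (G r ?u c - G r ?v c)^2) = Esum r w ?u ?v" .
  have nS: "None \<notin> Some ` (PS w \<times> (UNIV::bool set))" by auto
  have "nrm r ?u ?v = sqrt ((rho ?u - rho ?v)^2 + Esum r w ?u ?v)"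
    unfolding nrm_eq[OF fT sub] L2_set_def using S
    by (simp add: sum.insert[OF _ nS] finite_PS)
  also have "(rho ?u - rho ?v)^2 = (1/4)^length w"
  proof -
    have "(rho ?u - rho ?v)^2 = (\<bar>rho ?u - rho ?v\<bar>)^2" by simp
    also have "\<dots> = ((1/2)^length w)^2" using EL(1) by simp
    also have "\<dots> = (1/4)^length w" by (simp add: power_mult_distrib[symmetric] power2_eq_square flip: power_mult_distrib)
    finally show ?thesis .
  qed
  finally have N: "nrm r ?u ?v = sqrt ((1/4)^length w + Esum r w ?u ?v)" .
  have q: "(1/4::real)^length w \<le> (r^2)^length w"
  proof (rule power_mono)
    have "(1/2)*(1/2) \<le> r * r" using r by (intro mult_mono) auto
    then show "1/4 \<le> r^2" by (simp add: power2_eq_square)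
  qed simp
  have q2: "(r^2)^length w = r^(2*length w)" by (simp add: power_mult)
  have "0 \<le> B * (1/4::real)^length w" using B by simp
  then have "(1/4)^length w + Esum r w ?u ?v \<le> (B + 1) * r^(2*length w)"
    using EL(2) q q2 by (simp add: algebra_simps)
  then have "nrm r ?u ?v \<le> sqrt ((B + 1) * r^(2*length w))" unfolding N by simp
  also have "\<dots> = sqrt (B + 1) * r^length w"
  proof -
    have "r^(2*length w) = (r^length w)^2" by (simp add: power_mult[symmetric] mult.commute)
    moreover have "0 \<le> r^length w" using r by simp
    ultimately have "sqrt (r^(2*length w)) = r^length w" by simp
    then show ?thesis by (simp add: real_sqrt_mult)
  qed
  finally show ?thesis .
qed


lemma walk_nonneg: assumes "0 \<le> 1/2 + eps" shows "wwalk eps n x y d \<Longrightarrow> 0 \<le> d"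
  by (induction rule: wwalk.induct) (use assms in \<open>auto simp: wedge_def\<close>)

lemma walk_trans: "wwalk eps n x y d1 \<Longrightarrow> wwalk eps n y z d2 \<Longrightarrow> wwalk eps n x z (d1 + d2)"
proof (induction arbitrary: d2 rule: wwalk.induct)
  case (refl x) then show ?case by simp
next
  case (step u v c y d)
  then have "wwalk eps n u z (c + (d + d2))" by (intro wwalk.step[OF step.hyps(1) step.IH]) auto
  then show ?case by (simp add: add.assoc)
qed

lemma edge_walk: "wedge eps n u v c \<Longrightarrow> wwalk eps n u v c"
  using wwalk.step[OF _ wwalk.refl] by fastforce

lemma wedge_sym: "wedge eps n u v c \<Longrightarrow> wedge eps n v u c"
  unfolding wedge_def by blast

lemma walk_sym: "wwalk eps n x y d \<Longrightarrow> wwalk eps n y x d"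
proof (induction rule: wwalk.induct)
  case (refl x) then show ?case by (rule wwalk.refl)
next
  case (step u v c y d)
  have "wwalk eps n y u (d + c)" by (rule walk_trans[OF step.IH edge_walk[OF wedge_sym[OF step.hyps(1)]]])
  then show ?case by (simp add: add.commute)
qed

lemma addrs_snoc: "w \<in> addrs j \<Longrightarrow> k < 4 \<Longrightarrow> w @ [k] \<in> addrs (Suc j)"
  unfolding addrs_def by auto

lemma wedge_cp: "k < 4 \<Longrightarrow> wedge eps m u v c \<Longrightarrow> wedge eps (Suc m) (cp k u) (cp k v) ((1/2+eps)*c)"
  unfolding wedge_def
proof (elim exE conjE bexE)
  fix j w assume k: "k < 4" and j: "j \<le> m" and w: "w \<in> addrs j"
    and e: "ends w = (u, v) \<or> ends w = (v, u)" and c: "c = (1/2 + eps)^j"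
  show "\<exists>j\<le>Suc m. \<exists>w\<in>addrs j. (ends w = (cp k u, cp k v) \<or> ends w = (cp k v, cp k u)) \<and> (1/2+eps)*c = (1/2 + eps)^j"
  proof (intro exI[of _ "Suc j"] conjI bexI[of _ "w @ [k]"])
    show "ends (w @ [k]) = (cp k u, cp k v) \<or> ends (w @ [k]) = (cp k v, cp k u)"
      using e by (auto simp: ends_snoc)
  qed (use j addrs_snoc[OF w k] c in auto)
qed

lemma walk_cp: assumes k: "k < 4" shows "wwalk eps m x y d \<Longrightarrow> wwalk eps (Suc m) (cp k x) (cp k y) ((1/2+eps)*d)"
proof (induction rule: wwalk.induct)
  case (refl x) then show ?case using wwalk.refl by fastforce
next
  case (step u v c y d)
  have "wwalk eps (Suc m) (cp k u) (cp k y) ((1/2+eps)*c + (1/2+eps)*d)"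
    by (rule wwalk.step[OF wedge_cp[OF k step.hyps(1)] step.IH])
  then show ?case by (simp add: distrib_left)
qed

lemma walk_upper:
  assumes B: "0 \<le> B" "1 + B \<le> 4 * (1/2+eps)^2 * B" and r: "0 \<le> eps"
  shows "wwalk eps n x y d \<Longrightarrow> nrm (1/2+eps) x y \<le> sqrt (B + 1) * d"
proof (induction rule: wwalk.induct)
  case (refl x) then show ?case by (simp add: nrm_refl)
next
  case (step u v c y d)
  from step.hyps(1) obtain j w where w: "w \<in> addrs j" and e: "ends w = (u, v) \<or> ends w = (v, u)"
    and c: "c = (1/2 + eps)^j" unfolding wedge_def by blast
  have lw: "length w = j" using w unfolding addrs_def by auto
  have "nrm (1/2+eps) u v \<le> sqrt (B + 1) * c"
    using edge_nrm[OF B, of w] r e c lw nrm_sym by auto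
  then have "nrm (1/2+eps) u y \<le> sqrt (B + 1) * c + sqrt (B + 1) * d"
    using nrm_triangle[of "1/2+eps" u y v] step.IH by linarith
  then show ?case by (simp add: distrib_left)
qed


lemma dverts_0: "x \<in> dverts 0 \<Longrightarrow> x = Src \<or> x = Snk"
  unfolding dverts_def by auto

lemma dverts_Suc: assumes "x \<in> dverts (Suc m)" shows "\<exists>k<4. \<exists>x'\<in>dverts m. x = cp k x'"
proof -
  have S: "Src \<in> dverts m" "Snk \<in> dverts m" unfolding dverts_def by auto
  consider "x = Src" | "x = Snk" | w b where "x = Mid w b" "w \<in> addrs (length w)" "length w < Suc m"
    using assms unfolding dverts_def by auto
  then show ?thesis
  proof cases
    case 1 then show ?thesis using S by (intro exI[of _ 0]) force
  next
    case 2 then show ?thesis using S by (intro exI[of _ 1]) force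
  next
    case 3
    show ?thesis
    proof (cases w rule: rev_exhaust)
      case Nil
      show ?thesis
      proof (cases b)
        case True then show ?thesis using S 3 Nil by (intro exI[of _ 2]) force
      next
        case False then show ?thesis using S 3 Nil by (intro exI[of _ 0]) force
      qed
    next
      case (snoc w' k)
      have k: "k < 4" using 3 snoc unfolding addrs_def by auto
      have "Mid w' b \<in> dverts m" using 3 snoc unfolding dverts_def addrs_def by auto
      then show ?thesis using k 3 snoc by (intro exI[of _ k]) force
    qed
  qed
qed

lemma wedge1: "k < 4 \<Longrightarrow> wedge eps (Suc m) (fst (ends [k])) (snd (ends [k])) (1/2+eps)"
  unfolding wedge_def by (intro exI[of _ 1] conjI bexI[of _ "[k]"]) (auto simp: addrs_def)

lemma wedge0: "wedge eps n Src Snk 1"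
  unfolding wedge_def addrs_def by (intro exI[of _ 0]) force

lemma e_SA: "wwalk eps (Suc m) (Mid [] False) Src (1/2+eps)"
  using edge_walk[OF wedge_sym[OF wedge1[of 0]]] by simp
lemma e_SB: "wwalk eps (Suc m) (Mid [] True) Src (1/2+eps)"
  using edge_walk[OF wedge_sym[OF wedge1[of 2]]] by simp
lemma e_AT: "wwalk eps (Suc m) (Mid [] False) Snk (1/2+eps)"
  using edge_walk[OF wedge1[of 1]] by simp
lemma e_BT: "wwalk eps (Suc m) (Mid [] True) Snk (1/2+eps)"
  using edge_walk[OF wedge1[of 3]] by simp

lemma Darith: fixes r :: real assumes "0 \<le> r" "r < 1" shows "r * (1/(1-r)) + r \<le> 1/(1-r)"
proof -
  have p: "0 < 1 - r" using assms by linarith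
  have "0 \<le> (1-r)^2" by simp
  then have "r + r * (1 - r) \<le> 1" by (simp add: power2_eq_square algebra_simps)
  then have "(r + r * (1 - r)) / (1-r) \<le> 1 / (1-r)" using p by (intro divide_right_mono) auto
  moreover have "r * (1/(1-r)) + r = (r + r*(1-r))/(1-r)" using p by (simp add: field_simps)
  ultimately show ?thesis by simp
qed

lemma diam:
  assumes e: "0 \<le> eps" "eps < 1/2"
  shows "x \<in> dverts n \<Longrightarrow> (\<exists>d. wwalk eps n x Src d \<and> d \<le> 1/(1/2 - eps)) \<and> (\<exists>d. wwalk eps n x Snk d \<and> d \<le> 1/(1/2 - eps))"
proof (induction n arbitrary: x)
  define D where "D = 1/(1/2 - eps)"
  have D1: "1 \<le> D" unfolding D_def using e by (simp add: field_simps)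
  have D0: "0 \<le> (1::real)" by simp
  case 0
  then have "x = Src \<or> x = Snk" by (rule dverts_0)
  then show ?case
  proof
    assume x: "x = Src"
    have a: "wwalk eps 0 Src Src 0" by (rule wwalk.refl)
    have b: "wwalk eps 0 Src Snk 1" by (rule edge_walk[OF wedge0])
    have c: "(0::real) \<le> 1/(1/2-eps)" "(1::real) \<le> 1/(1/2-eps)" using D1 e unfolding D_def by auto
    show ?thesis unfolding x
      by (rule conjI; rule exI) (rule conjI, rule a, rule c(1), rule conjI, rule b, rule c(2))
  next
    assume x: "x = Snk"
    have a: "wwalk eps 0 Snk Snk 0" by (rule wwalk.refl)
    have b: "wwalk eps 0 Snk Src 1" by (rule edge_walk[OF wedge_sym[OF wedge0]])
    have c: "(0::real) \<le> 1/(1/2-eps)" "(1::real) \<le> 1/(1/2-eps)" using D1 e unfolding D_def by auto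
    show ?thesis unfolding x
      by (rule conjI; rule exI) (rule conjI, rule b, rule c(2), rule conjI, rule a, rule c(1))
  qed
next
  case (Suc m)
  define r where "r = 1/2 + eps"
  define D where "D = 1/(1/2 - eps)"
  have r: "0 \<le> r" "r < 1" using e unfolding r_def by auto
  have D: "D = 1/(1-r)" unfolding D_def r_def by simp
  have DA: "r * D + r \<le> D" using Darith[OF r] D by simp
  have D0: "0 \<le> D" unfolding D using r by simp
  obtain k x' where k: "k < 4" and x': "x' \<in> dverts m" and x: "x = cp k x'"
    using dverts_Suc[OF Suc.prems] by blast
  obtain d1 where d1: "wwalk eps m x' Src d1" "d1 \<le> D" using Suc.IH[OF x'] unfolding D_def by blast
  obtain d2 where d2: "wwalk eps m x' Snk d2" "d2 \<le> D" using Suc.IH[OF x'] unfolding D_def by blast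
  have n1: "0 \<le> d1" "0 \<le> d2" using walk_nonneg[of eps] d1 d2 e by auto
  have w1: "wwalk eps (Suc m) x (cp k Src) (r * d1)" using walk_cp[OF k d1(1)] x r_def by simp
  have w2: "wwalk eps (Suc m) x (cp k Snk) (r * d2)" using walk_cp[OF k d2(1)] x r_def by simp
  have b1: "r * d1 \<le> D" "r * d2 \<le> D"
    using mult_mono[of r 1 d1 D] mult_mono[of r 1 d2 D] r n1 d1 d2 D0 by auto
  have b2: "r * d1 + r \<le> D" "r * d2 + r \<le> D"
    using mult_left_mono[of d1 D r] mult_left_mono[of d2 D r] r d1 d2 DA by auto
  have A: "\<exists>d. wwalk eps (Suc m) x Src d \<and> d \<le> D"
  proof -
    consider "k = 0 \<or> k = 2" | "k = 1" | "k = 3" using k by arith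
    then show ?thesis
    proof cases
      case 1 then show ?thesis using w1 b1 by auto
    next
      case 2
      then have "wwalk eps (Suc m) x (Mid [] False) (r * d1)" using w1 by simp
      then show ?thesis using walk_trans[OF _ e_SA[of eps m, folded r_def]] b2 by blast
    next
      case 3
      then have "wwalk eps (Suc m) x (Mid [] True) (r * d1)" using w1 by simp
      then show ?thesis using walk_trans[OF _ e_SB[of eps m, folded r_def]] b2 by blast
    qed
  qed
  have B: "\<exists>d. wwalk eps (Suc m) x Snk d \<and> d \<le> D"
  proof -
    consider "k = 1 \<or> k = 3" | "k = 0" | "k = 2" using k by arith
    then show ?thesis
    proof cases
      case 1 then show ?thesis using w2 b1 by auto
    next
      case 2
      then have "wwalk eps (Suc m) x (Mid [] False) (r * d2)" using w2 by simp
      then show ?thesis using walk_trans[OF _ e_AT[of eps m, folded r_def]] b2 by blast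
    next
      case 3
      then have "wwalk eps (Suc m) x (Mid [] True) (r * d2)" using w2 by simp
      then show ?thesis using walk_trans[OF _ e_BT[of eps m, folded r_def]] b2 by blast
    qed
  qed
  show ?case using A B unfolding D_def by blast
qed


lemma F_snoc_bound:
  assumes "\<forall>c. \<bar>F r (cp k x) c\<bar> \<le> Q" "0 < r"
  shows "\<forall>c. \<bar>F r x c\<bar> \<le> Q / r"
proof
  fix c :: "nat list \<times> bool"
  obtain s bb where c: "c = (s, bb)" by (cases c)
  have "\<bar>F r (cp k x) (s @ [k], bb)\<bar> \<le> Q" using assms(1) by blast
  then have "r * \<bar>F r x (s, bb)\<bar> \<le> Q" using assms(2) by (simp add: F_cp_snoc abs_mult)
  then show "\<bar>F r x c\<bar> \<le> Q / r" using assms(2) c by (simp add: field_simps mult.commute)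
qed

lemma phi_nonneg: "0 \<le> phi (rho x)"
  using rho_bounds[of x] by (simp add: phi_def)

lemma Elem:
  assumes e: "0 < eps" "eps < 1/2"
  shows "x \<in> dverts n \<Longrightarrow> (\<forall>c. \<bar>F (1/2+eps) x c\<bar> \<le> Q) \<Longrightarrow>
    (rho x \<le> 1/2 \<longrightarrow> (\<exists>d. wwalk eps n x Src d \<and> d \<le> 4 * (1/(1/2-eps)) * Q)) \<and>
    (1/2 \<le> rho x \<longrightarrow> (\<exists>d. wwalk eps n x Snk d \<and> d \<le> 4 * (1/(1/2-eps)) * Q))"
proof (induction n arbitrary: x Q)
  case 0
  have Q0: "0 \<le> Q" using 0(2) by (meson abs_ge_zero order_trans)
  have D0: "0 \<le> 4 * (1/(1/2-eps)) * Q" using Q0 e by simp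
  from dverts_0[OF 0(1)] show ?case
  proof
    assume x: "x = Src"
    show ?thesis unfolding x using wwalk.refl D0 by auto
  next
    assume x: "x = Snk"
    show ?thesis unfolding x using wwalk.refl D0 by auto
  qed
next
  case (Suc m)
  define r where "r = 1/2 + eps"
  define D where "D = 1/(1/2 - eps)"
  have r: "0 < r" "r < 1" "1/2 < r" using e unfolding r_def by auto
  have D1: "1 \<le> D" unfolding D_def using e by (simp add: field_simps)
  have Q0: "0 \<le> Q" using Suc.prems(2) by (meson abs_ge_zero order_trans)
  obtain k x' where k: "k < 4" and x': "x' \<in> dverts m" and x: "x = cp k x'"
    using dverts_Suc[OF Suc.prems(1)] by blast
  have hyp': "\<forall>c. \<bar>F r x' c\<bar> \<le> Q / r"
    using F_snoc_bound[of r k x' Q] Suc.prems(2) x r unfolding r_def by auto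
  have lev0: "phi (rho x) \<le> Q"
  proof -
    have "\<bar>F r x ([], brk k)\<bar> \<le> Q" using Suc.prems(2) unfolding r_def by blast
    then show ?thesis using x phi_nonneg[of x] by (simp add: F_cp_nil)
  qed
  show ?case
  proof (cases "1/4 \<le> Q")
    case True
    have "D \<le> 4 * D * Q" using True D1 by (simp add: mult.assoc)
    then show ?thesis using diam[of eps x "Suc m"] e Suc.prems(1) unfolding D_def by force
  next
    case False
    then have ph: "phi (rho x) < 1/4" using lev0 by simp
    have rc: "rho x = (if hi k then 1/2 else 0) + rho x' / 2" using x by (simp add: rho_cp)
    have rb: "0 \<le> rho x'" "rho x' \<le> 1" using rho_bounds by auto
    have A: "rho x \<le> 1/2 \<longrightarrow> (\<exists>d. wwalk eps (Suc m) x Src d \<and> d \<le> 4 * D * Q)"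
    proof
      assume le: "rho x \<le> 1/2"
      then have "phi (rho x) = rho x" by (simp add: phi_def)
      then have lt: "rho x < 1/4" using ph by simp
      then have nh: "\<not> hi k" using rc rb by (auto split: if_splits)
      then have k02: "k = 0 \<or> k = 2" unfolding hi_def by auto
      have "rho x' \<le> 1/2" using rc nh lt by simp
      then obtain d' where d': "wwalk eps m x' Src d'" "d' \<le> 4 * D * (Q / r)"
        using Suc.IH[OF x' hyp'[unfolded r_def]] unfolding D_def r_def by blast
      have "wwalk eps (Suc m) x (cp k Src) (r * d')" using walk_cp[OF k d'(1)] x unfolding r_def by simp
      moreover have "cp k Src = Src" using k02 by auto
      moreover have "r * d' \<le> 4 * D * Q"
      proof -
        have "r * d' \<le> r * (4 * D * (Q / r))" using d'(2) r by (intro mult_left_mono) auto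
        also have "\<dots> = 4 * D * Q" using r by simp
        finally show ?thesis .
      qed
      ultimately show "\<exists>d. wwalk eps (Suc m) x Src d \<and> d \<le> 4 * D * Q" by auto
    qed
    have B: "1/2 \<le> rho x \<longrightarrow> (\<exists>d. wwalk eps (Suc m) x Snk d \<and> d \<le> 4 * D * Q)"
    proof
      assume le: "1/2 \<le> rho x"
      then have "phi (rho x) = 1 - rho x" by (simp add: phi_def)
      then have lt: "3/4 < rho x" using ph by simp
      then have nh: "hi k" using rc rb by (auto split: if_splits)
      then have k13: "k = 1 \<or> k = 3" using k unfolding hi_def by auto
      have "1/2 \<le> rho x'" using rc nh lt by simp
      then obtain d' where d': "wwalk eps m x' Snk d'" "d' \<le> 4 * D * (Q / r)"
        using Suc.IH[OF x' hyp'[unfolded r_def]] unfolding D_def r_def by blast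
      have "wwalk eps (Suc m) x (cp k Snk) (r * d')" using walk_cp[OF k d'(1)] x unfolding r_def by simp
      moreover have "cp k Snk = Snk" using k13 by auto
      moreover have "r * d' \<le> 4 * D * Q"
      proof -
        have "r * d' \<le> r * (4 * D * (Q / r))" using d'(2) r by (intro mult_left_mono) auto
        also have "\<dots> = 4 * D * Q" using r by simp
        finally show ?thesis .
      qed
      ultimately show "\<exists>d. wwalk eps (Suc m) x Snk d \<and> d \<le> 4 * D * Q" by auto
    qed
    show ?thesis using A B unfolding D_def by blast
  qed
qed


lemma Fnil_val: "F r (cp k x) ([], bb) = (if bb = brk k then (if hi k then (1 - rho x)/2 else rho x / 2) else 0)"
  by (simp add: F_cp_nil phi_cp)

lemma phi_le: "phi t \<le> a \<Longrightarrow> t \<le> a \<or> 1 - t \<le> a"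
  by (auto simp: phi_def min_def split: if_splits)

lemma Ecp:
  assumes e: "0 < eps" "eps < 1/2" and k: "k < 4" and x': "x' \<in> dverts m"
    and h: "\<forall>c. \<bar>F (1/2+eps) x' c\<bar> \<le> Q / (1/2+eps)"
  shows "rho x' \<le> 1/2 \<Longrightarrow> \<exists>d. wwalk eps (Suc m) (cp k x') (cp k Src) d \<and> d \<le> 4 * (1/(1/2-eps)) * Q"
    and "1/2 \<le> rho x' \<Longrightarrow> \<exists>d. wwalk eps (Suc m) (cp k x') (cp k Snk) d \<and> d \<le> 4 * (1/(1/2-eps)) * Q"
proof -
  define r where "r = 1/2 + eps"
  define D where "D = 1/(1/2 - eps)"
  have r: "0 < r" using e unfolding r_def by auto
  have bnd: "\<And>d'. d' \<le> 4 * D * (Q / r) \<Longrightarrow> r * d' \<le> 4 * D * Q"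
  proof -
    fix d' assume "d' \<le> 4 * D * (Q / r)"
    then have "r * d' \<le> r * (4 * D * (Q / r))" using r by (intro mult_left_mono) auto
    also have "\<dots> = 4 * D * Q" using r by simp
    finally show "r * d' \<le> 4 * D * Q" .
  qed
  note E = Elem[OF e x' h]
  show "rho x' \<le> 1/2 \<Longrightarrow> \<exists>d. wwalk eps (Suc m) (cp k x') (cp k Src) d \<and> d \<le> 4 * (1/(1/2-eps)) * Q"
  proof -
    assume "rho x' \<le> 1/2"
    then obtain d' where d': "wwalk eps m x' Src d'" "d' \<le> 4 * D * (Q / r)"
      using E unfolding D_def r_def by blast
    show ?thesis using walk_cp[OF k d'(1)] bnd[OF d'(2)] unfolding D_def r_def by blast
  qed
  show "1/2 \<le> rho x' \<Longrightarrow> \<exists>d. wwalk eps (Suc m) (cp k x') (cp k Snk) d \<and> d \<le> 4 * (1/(1/2-eps)) * Q"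
  proof -
    assume "1/2 \<le> rho x'"
    then obtain d' where d': "wwalk eps m x' Snk d'" "d' \<le> 4 * D * (Q / r)"
      using E unfolding D_def r_def by blast
    show ?thesis using walk_cp[OF k d'(1)] bnd[OF d'(2)] unfolding D_def r_def by blast
  qed
qed

lemma join:
  assumes "wwalk eps n x z d1" "d1 \<le> M" "wwalk eps n y z d2" "d2 \<le> M"
  shows "\<exists>d. wwalk eps n x y d \<and> d \<le> 2 * M"
  using walk_trans[OF assms(1) walk_sym[OF assms(3)]] assms(2,4) by (intro exI[of _ "d1 + d2"]) auto

lemma cross:
  assumes e: "0 < eps" "eps < 1/2" and ab: "a < b" "b < 4"
    and x': "x' \<in> dverts m" and y': "y' \<in> dverts m"
    and H: "\<forall>c. \<bar>F (1/2+eps) (cp a x') c - F (1/2+eps) (cp b y') c\<bar> \<le> Q"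
    and Hr: "\<bar>rho (cp a x') - rho (cp b y')\<bar> \<le> 2 * Q"
    and Qs: "Q < 1/5"
  shows "\<exists>d. wwalk eps (Suc m) (cp a x') (cp b y') d \<and> d \<le> 2 * (4 * (1/(1/2-eps)) * Q)"
proof -
  define r where "r = 1/2 + eps"
  have r: "0 < r" "1/2 < r" "r < 1" using e unfolding r_def by auto
  have Q0: "0 \<le> Q" using H by (meson abs_ge_zero order_trans)
  have a4: "a < 4" using ab by simp
  have hx: "\<forall>c. \<bar>F r x' c\<bar> \<le> Q / r"
  proof
    fix c :: "nat list \<times> bool"
    obtain s bb where c: "c = (s, bb)" by (cases c)
    have "\<bar>F r (cp a x') (s @ [a], bb) - F r (cp b y') (s @ [a], bb)\<bar> \<le> Q" using H unfolding r_def by blast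
    then have "r * \<bar>F r x' (s, bb)\<bar> \<le> Q" using ab r by (simp add: F_cp_snoc abs_mult)
    then show "\<bar>F r x' c\<bar> \<le> Q / r" using r c by (simp add: field_simps mult.commute)
  qed
  have hy: "\<forall>c. \<bar>F r y' c\<bar> \<le> Q / r"
  proof
    fix c :: "nat list \<times> bool"
    obtain s bb where c: "c = (s, bb)" by (cases c)
    have "\<bar>F r (cp a x') (s @ [b], bb) - F r (cp b y') (s @ [b], bb)\<bar> \<le> Q" using H unfolding r_def by blast
    then have "r * \<bar>F r y' (s, bb)\<bar> \<le> Q" using ab r by (simp add: F_cp_snoc abs_mult)
    then show "\<bar>F r y' c\<bar> \<le> Q / r" using r c by (simp add: field_simps mult.commute)
  qed
  have Qr: "Q / r \<le> 2 * Q"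
  proof -
    have "Q * 1 \<le> Q * (r * 2)" using r Q0 by (intro mult_left_mono) auto
    then show ?thesis using r by (simp add: field_simps)
  qed
  have px: "rho x' \<le> 2 * Q \<or> 1 - rho x' \<le> 2 * Q"
  proof -
    have "\<bar>F r x' ([], br x')\<bar> \<le> Q / r" using hx by blast
    then have "phi (rho x') \<le> 2 * Q" using Qr by (simp add: F_nil_br)
    then show ?thesis by (rule phi_le)
  qed
  have py: "rho y' \<le> 2 * Q \<or> 1 - rho y' \<le> 2 * Q"
  proof -
    have "\<bar>F r y' ([], br y')\<bar> \<le> Q / r" using hy by blast
    then have "phi (rho y') \<le> 2 * Q" using Qr by (simp add: F_nil_br)
    then show ?thesis by (rule phi_le)
  qed
  have lF: "\<bar>F r (cp a x') ([], False) - F r (cp b y') ([], False)\<bar> \<le> Q" using H unfolding r_def by blast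
  have lT: "\<bar>F r (cp a x') ([], True) - F r (cp b y') ([], True)\<bar> \<le> Q" using H unfolding r_def by blast
  note lF' = lF[unfolded Fnil_val] and lT' = lT[unfolded Fnil_val]
  note Hr' = Hr[unfolded rho_cp]
  note EX = Ecp[OF e _ x' hx[unfolded r_def]] and EY = Ecp[OF e _ y' hy[unfolded r_def]]
  have rb: "0 \<le> rho x'" "rho x' \<le> 1" "0 \<le> rho y'" "rho y' \<le> 1" using rho_bounds by auto
  consider "a = 0" "b = 1" | "a = 0" "b = 2" | "a = 0" "b = 3" | "a = 1" "b = 2" | "a = 1" "b = 3" | "a = 2" "b = 3"
    using ab by arith
  then show ?thesis
  proof cases
    case 1
    have c1a: "1/2 \<le> rho x'"
      using lF' Hr' px py Qs 1 by ((simp_all add: brk_def hi_def abs_le_iff diff_divide_distrib add_divide_distrib); (elim disjE conjE)?; linarith)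
    have c1b: "rho y' \<le> 1/2"
      using lF' Hr' px py Qs 1 by ((simp_all add: brk_def hi_def abs_le_iff diff_divide_distrib add_divide_distrib); (elim disjE conjE)?; linarith)
    note c1 = c1a c1b
    obtain d1 where d1: "wwalk eps (Suc m) (cp a x') (cp a Snk) d1" "d1 \<le> 4 * (1/(1/2-eps)) * Q"
      using EX(2)[OF a4 c1(1)] by blast
    obtain d2 where d2: "wwalk eps (Suc m) (cp b y') (cp b Src) d2" "d2 \<le> 4 * (1/(1/2-eps)) * Q"
      using EY(1)[OF ab(2) c1(2)] by blast
    have eq: "cp b Src = cp a Snk" using 1 by simp
    show ?thesis using join[OF d1(1) d1(2) d2(1)[unfolded eq] d2(2)] .
  next
    case 2
    have c1a: "rho x' \<le> 1/2"
      using lF' lT' Hr' px py Qs 2 by ((simp_all add: brk_def hi_def abs_le_iff diff_divide_distrib add_divide_distrib); (elim disjE conjE)?; linarith)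
    have c1b: "rho y' \<le> 1/2"
      using lF' lT' Hr' px py Qs 2 by ((simp_all add: brk_def hi_def abs_le_iff diff_divide_distrib add_divide_distrib); (elim disjE conjE)?; linarith)
    note c1 = c1a c1b
    obtain d1 where d1: "wwalk eps (Suc m) (cp a x') (cp a Src) d1" "d1 \<le> 4 * (1/(1/2-eps)) * Q"
      using EX(1)[OF a4 c1(1)] by blast
    obtain d2 where d2: "wwalk eps (Suc m) (cp b y') (cp b Src) d2" "d2 \<le> 4 * (1/(1/2-eps)) * Q"
      using EY(1)[OF ab(2) c1(2)] by blast
    have eq: "cp b Src = cp a Src" using 2 by simp
    show ?thesis using join[OF d1(1) d1(2) d2(1)[unfolded eq] d2(2)] .
  next
    case 3
    have False using lF' lT' Hr' px py Qs rb 3 by ((simp_all add: brk_def hi_def abs_le_iff diff_divide_distrib add_divide_distrib); (elim disjE conjE)?; linarith)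
    then show ?thesis ..
  next
    case 4
    have False using lF' lT' Hr' px py Qs rb 4 by ((simp_all add: brk_def hi_def abs_le_iff diff_divide_distrib add_divide_distrib); (elim disjE conjE)?; linarith)
    then show ?thesis ..
  next
    case 5
    have c1a: "1/2 \<le> rho x'"
      using lF' lT' Hr' px py Qs 5 by ((simp_all add: brk_def hi_def abs_le_iff diff_divide_distrib add_divide_distrib); (elim disjE conjE)?; linarith)
    have c1b: "1/2 \<le> rho y'"
      using lF' lT' Hr' px py Qs 5 by ((simp_all add: brk_def hi_def abs_le_iff diff_divide_distrib add_divide_distrib); (elim disjE conjE)?; linarith)
    note c1 = c1a c1b
    obtain d1 where d1: "wwalk eps (Suc m) (cp a x') (cp a Snk) d1" "d1 \<le> 4 * (1/(1/2-eps)) * Q"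
      using EX(2)[OF a4 c1(1)] by blast
    obtain d2 where d2: "wwalk eps (Suc m) (cp b y') (cp b Snk) d2" "d2 \<le> 4 * (1/(1/2-eps)) * Q"
      using EY(2)[OF ab(2) c1(2)] by blast
    have eq: "cp b Snk = cp a Snk" using 5 by simp
    show ?thesis using join[OF d1(1) d1(2) d2(1)[unfolded eq] d2(2)] .
  next
    case 6
    have c1a: "1/2 \<le> rho x'"
      using lT' Hr' px py Qs 6 by ((simp_all add: brk_def hi_def abs_le_iff diff_divide_distrib add_divide_distrib); (elim disjE conjE)?; linarith)
    have c1b: "rho y' \<le> 1/2"
      using lT' Hr' px py Qs 6 by ((simp_all add: brk_def hi_def abs_le_iff diff_divide_distrib add_divide_distrib); (elim disjE conjE)?; linarith)
    note c1 = c1a c1b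
    obtain d1 where d1: "wwalk eps (Suc m) (cp a x') (cp a Snk) d1" "d1 \<le> 4 * (1/(1/2-eps)) * Q"
      using EX(2)[OF a4 c1(1)] by blast
    obtain d2 where d2: "wwalk eps (Suc m) (cp b y') (cp b Src) d2" "d2 \<le> 4 * (1/(1/2-eps)) * Q"
      using EY(1)[OF ab(2) c1(2)] by blast
    have eq: "cp b Src = cp a Snk" using 6 by simp
    show ?thesis using join[OF d1(1) d1(2) d2(1)[unfolded eq] d2(2)] .
  qed
qed


lemma Plem:
  assumes e: "0 < eps" "eps < 1/2"
  shows "x \<in> dverts n \<Longrightarrow> y \<in> dverts n \<Longrightarrow> (\<forall>c. \<bar>F (1/2+eps) x c - F (1/2+eps) y c\<bar> \<le> Q) \<Longrightarrow>
    \<bar>rho x - rho y\<bar> \<le> 2 * Q \<Longrightarrow> \<exists>d. wwalk eps n x y d \<and> d \<le> 10 * (1/(1/2-eps)) * Q"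
proof (induction n arbitrary: x y Q)
  case (0 x y Q)
  define D where "D = 1/(1/2 - eps)"
  have D1: "1 \<le> D" unfolding D_def using e by (simp add: field_simps)
  have Q0: "0 \<le> Q" using "0.prems"(3) by (meson abs_ge_zero order_trans)
  show ?case
  proof (cases "x = y")
    case True
    then show ?thesis using wwalk.refl[of eps 0 x] Q0 D1 e by (intro exI[of _ 0]) auto
  next
    case False
    then have "\<bar>rho x - rho y\<bar> = 1" using dverts_0[OF "0.prems"(1)] dverts_0[OF "0.prems"(2)] by auto
    then have Q: "1/5 \<le> Q" using "0.prems"(4) by simp
    obtain d1 where d1: "wwalk eps 0 x Src d1" "d1 \<le> D" using diam[of eps x 0] e "0.prems"(1) unfolding D_def by auto
    obtain d2 where d2: "wwalk eps 0 y Src d2" "d2 \<le> D" using diam[of eps y 0] e "0.prems"(2) unfolding D_def by auto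
    have "2 * D \<le> 10 * D * Q" using Q D1 by simp
    then show ?thesis using join[OF d1(1) d1(2) d2] unfolding D_def by force
  qed
next
  case (Suc m x y Q)
  define r where "r = 1/2 + eps"
  define D where "D = 1/(1/2 - eps)"
  have r: "0 < r" "r < 1" "1/2 < r" using e unfolding r_def by auto
  have D1: "1 \<le> D" unfolding D_def using e by (simp add: field_simps)
  have Q0: "0 \<le> Q" using Suc.prems(3) by (meson abs_ge_zero order_trans)
  show ?case
  proof (cases "1/5 \<le> Q")
    case True
    obtain d1 where d1: "wwalk eps (Suc m) x Src d1" "d1 \<le> D" using diam[of eps x "Suc m"] e Suc.prems(1) unfolding D_def by auto
    obtain d2 where d2: "wwalk eps (Suc m) y Src d2" "d2 \<le> D" using diam[of eps y "Suc m"] e Suc.prems(2) unfolding D_def by auto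
    have "2 * D \<le> 10 * D * Q" using True D1 by simp
    then show ?thesis using join[OF d1(1) d1(2) d2] unfolding D_def by force
  next
    case False
    then have Qs: "Q < 1/5" by simp
    obtain a x' where a: "a < 4" and x': "x' \<in> dverts m" and x: "x = cp a x'"
      using dverts_Suc[OF Suc.prems(1)] by blast
    obtain b y' where b: "b < 4" and y': "y' \<in> dverts m" and y: "y = cp b y'"
      using dverts_Suc[OF Suc.prems(2)] by blast
    have H: "\<forall>c. \<bar>F (1/2+eps) (cp a x') c - F (1/2+eps) (cp b y') c\<bar> \<le> Q" using Suc.prems(3) x y by simp
    have Hr: "\<bar>rho (cp a x') - rho (cp b y')\<bar> \<le> 2 * Q" using Suc.prems(4) x y by simp
    have DD: "2 * (4 * D * Q) \<le> 10 * D * Q" using D1 Q0 by simp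
    consider "a = b" | "a < b" | "b < a" by arith
    then show ?thesis
    proof cases
      case 1
      have hx: "\<forall>c. \<bar>F (1/2+eps) x' c - F (1/2+eps) y' c\<bar> \<le> Q / r"
      proof
        fix c :: "nat list \<times> bool"
        obtain s bb where c: "c = (s, bb)" by (cases c)
        have "\<bar>F r (cp a x') (s @ [a], bb) - F r (cp b y') (s @ [a], bb)\<bar> \<le> Q" using H unfolding r_def by blast
        then have "r * \<bar>F r x' (s, bb) - F r y' (s, bb)\<bar> \<le> Q" using 1 r
          by (simp add: F_cp_snoc abs_mult flip: right_diff_distrib)
        then show "\<bar>F (1/2+eps) x' c - F (1/2+eps) y' c\<bar> \<le> Q / r" using r c unfolding r_def by (simp add: field_simps mult.commute)
      qed
      have hr: "\<bar>rho x' - rho y'\<bar> \<le> 2 * (Q / r)"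
      proof -
        have "\<bar>F r (cp a x') ([], brk a) - F r (cp b y') ([], brk a)\<bar> \<le> Q" using H unfolding r_def by blast
        then have "\<bar>rho x' - rho y'\<bar> / 2 \<le> Q" using 1
          by (cases "hi a") (auto simp: Fnil_val abs_le_iff diff_divide_distrib)
        moreover have "Q \<le> Q / r" using r Q0 by (simp add: field_simps mult_left_le)
        ultimately show ?thesis by simp
      qed
      obtain d' where d': "wwalk eps m x' y' d'" "d' \<le> 10 * D * (Q / r)"
        using Suc.IH[OF x' y' hx[unfolded r_def] hr[unfolded r_def]] unfolding D_def r_def by blast
      have "wwalk eps (Suc m) x y (r * d')" using walk_cp[OF a d'(1)] x y 1 unfolding r_def by simp
      moreover have "r * d' \<le> 10 * D * Q"
      proof -
        have "r * d' \<le> r * (10 * D * (Q / r))" using d'(2) r by (intro mult_left_mono) auto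
        also have "\<dots> = 10 * D * Q" using r by simp
        finally show ?thesis .
      qed
      ultimately show ?thesis unfolding D_def by blast
    next
      case 2
      obtain d where "wwalk eps (Suc m) (cp a x') (cp b y') d" "d \<le> 2 * (4 * D * Q)"
        using cross[OF e 2 b x' y' H Hr Qs] unfolding D_def by blast
      then show ?thesis using DD x y unfolding D_def by force
    next
      case 3
      have H': "\<forall>c. \<bar>F (1/2+eps) (cp b y') c - F (1/2+eps) (cp a x') c\<bar> \<le> Q" using H by (simp add: abs_minus_commute)
      have Hr': "\<bar>rho (cp b y') - rho (cp a x')\<bar> \<le> 2 * Q" using Hr by (simp add: abs_minus_commute)
      obtain d where "wwalk eps (Suc m) (cp b y') (cp a x') d" "d \<le> 2 * (4 * D * Q)"
        using cross[OF e 3 a y' x' H' Hr' Qs] unfolding D_def by blast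
      then show ?thesis using DD x y walk_sym unfolding D_def by force
    qed
  qed
qed


definition emb :: "real \<Rightarrow> dvert \<Rightarrow> nat \<Rightarrow> real" where
  "emb r x i = (if i \<in> range (to_nat :: (nat list \<times> bool) option \<Rightarrow> nat) then G r x (from_nat i) else 0)"

lemma emb_to_nat: "emb r x (to_nat (c :: (nat list \<times> bool) option)) = G r x c"
  unfolding emb_def by simp

lemma emb_zero: "i \<notin> (to_nat :: (nat list \<times> bool) option \<Rightarrow> nat) ` T \<Longrightarrow> SG x \<subseteq> T \<Longrightarrow> emb r x i = 0"
  unfolding emb_def by (auto simp: image_iff intro!: G_supp)

lemma emb_ell2: "in_ell2 (emb r x)"
  unfolding in_ell2_def
  by (rule summable_finite[of "(to_nat :: (nat list \<times> bool) option \<Rightarrow> nat) ` SG x"])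
     (auto simp: finite_SG emb_zero[of _ "SG x"])

lemma emb_dist: "ell2_dist (emb r x) (emb r y) = nrm r x y"
proof -
  let ?T = "SG x \<union> SG y"
  let ?N = "(to_nat :: (nat list \<times> bool) option \<Rightarrow> nat) ` ?T"
  have "(\<Sum>i. (emb r x i - emb r y i)^2) = (\<Sum>i\<in>?N. (emb r x i - emb r y i)^2)"
    by (rule suminf_finite) (auto simp: finite_SG emb_zero[of _ ?T])
  also have "\<dots> = (\<Sum>c\<in>?T. (G r x c - G r y c)^2)"
    by (subst sum.reindex) (auto simp: emb_to_nat inj_on_def)
  finally show ?thesis unfolding ell2_dist_def nrm_def L2_set_def by simp
qed

theorem mainTheorem12:
  fixes eps :: real
  assumes "0 < eps" and "eps < 1/2"
  shows "\<exists>C::real. \<forall>n::nat. \<exists>f. embeds_with_distortion (dverts n) (wdist eps n) f C"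
proof -
  note e = assms
  define r where "r = 1/2 + eps"
  define D where "D = 1/(1/2 - eps)"
  define B where "B = 1 / (4 * r^2 - 1)"
  have r: "1/2 < r" "r < 1" using e unfolding r_def by auto
  have r4: "0 < 4 * r^2 - 1"
  proof -
    have "(1/2)*(1/2) < r * r" using r by (intro mult_strict_mono) auto
    then show ?thesis by (simp add: power2_eq_square)
  qed
  have B0: "0 \<le> B" unfolding B_def using r4 by simp
  have BB: "1 + B \<le> 4 * (1/2+eps)^2 * B"
  proof -
    have "B * (4 * r^2 - 1) = 1" unfolding B_def using r4 by simp
    then show ?thesis unfolding r_def[symmetric] by (simp add: algebra_simps)
  qed
  have D1: "1 \<le> D" unfolding D_def using e by (simp add: field_simps)
  define A where "A = sqrt (B + 1)"
  have A0: "0 < A" unfolding A_def using B0 by simp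
  show ?thesis
  proof (intro exI allI)
    fix n
    show "embeds_with_distortion (dverts n) (wdist eps n) (emb r) (A * (10 * D))"
      unfolding embeds_with_distortion_def
    proof (intro conjI ballI exI[of _ "1 / (10 * D)"])
      fix x assume "x \<in> dverts n" show "in_ell2 (emb r x)" by (rule emb_ell2)
    next
      show "0 < 1 / (10 * D)" using D1 by simp
    next
      fix x y assume x: "x \<in> dverts n" and y: "y \<in> dverts n"
      let ?S = "{d. wwalk eps n x y d}"
      let ?N = "nrm r x y"
      have c1: "\<forall>c. \<bar>F (1/2+eps) x c - F (1/2+eps) y c\<bar> \<le> ?N"
        using coord_le_nrm[of r x "Some c" y for c] unfolding r_def by auto
      have c2: "\<bar>rho x - rho y\<bar> \<le> 2 * ?N"
        using coord_le_nrm[of r x None y] by (simp add: L2_set_nonneg)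
      obtain d0 where d0: "wwalk eps n x y d0" "d0 \<le> 10 * D * ?N"
        using Plem[OF e x y c1 c2] unfolding D_def by blast
      have bdd: "bdd_below ?S"
        using walk_nonneg[of eps] e by (intro bdd_belowI[of _ 0]) auto
      have "wdist eps n x y \<le> d0" unfolding wdist_def using d0(1) bdd by (intro cInf_lower) auto
      then have W1: "wdist eps n x y \<le> 10 * D * ?N" using d0(2) by simp
      have W2: "?N / A \<le> wdist eps n x y"
        unfolding wdist_def
      proof (rule cInf_greatest)
        show "?S \<noteq> {}" using d0(1) by auto
      next
        fix d assume "d \<in> ?S"
        then have "?N \<le> A * d" using walk_upper[OF B0 BB] e unfolding A_def r_def by auto
        then show "?N / A \<le> d" using A0 by (simp add: field_simps mult.commute)
      qed
      have D0: "0 < 10 * D" using D1 by simp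
      show "1 / (10 * D) * wdist eps n x y \<le> ell2_dist (emb r x) (emb r y)"
        unfolding emb_dist using W1 D0 by (simp add: field_simps mult.commute)
      show "ell2_dist (emb r x) (emb r y) \<le> A * (10 * D) * (1 / (10 * D)) * wdist eps n x y"
        unfolding emb_dist using W2 D0 A0 by (simp add: field_simps mult.commute)
    qed
  qed
qed

end
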